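(* Let $G$ be a finite group acting linearly on a finite-dimensional complex vector space $V$ with $V^G=\{0\}$. Let $I\subseteq\mathbb{R}$ be an open interval containing $0$ and $c=(c_1,\dots,c_n):I\to V/\!\!/G=\sigma(V)\subseteq\mathbb{C}^n$ a curve of class $C^d$. Then the following are equivalent: (1) $m(c_k)\ge d_k$ for all $1\le k\le n$; (2) $m(f\circ c)\ge\deg f$ for all homogeneous $f\in\mathcal{J}_1$.
   Context: $V^G$ is the subspace of $G$-fixed vectors. $\sigma=(\sigma_1,\dots,\sigma_n)$, where $\sigma_1,\dots,\sigma_n$ is a minimal system of homogeneous generators of $\mathbb{C}[V]^G$ with degrees $d_1,\dots,d_n$, and $d=\max_k d_k$; $V/\!\!/G$ is identified with $\sigma(V)$. For $f\in\mathbb{C}[V]^G$ write $f=p\circ\sigma$ with a polynomial $p$ on $\mathbb{C}^n$ and set $f\circ c:=p\circ c$ (well-defined since $c$ takes values in $\sigma(V)$); $\deg f$ is its degree as a polynomial on $V$. The stratification: for a conjugacy class $(L)$ of subgroups, $(V/\!\!/G)_{(L)}$ is the set of $\sigma(v)$ with $G_v\in(L)$; $A_s$ is the union of those strata of dimension $\le s$. $\mathcal{J}_{s+1}$ denotes an ideal of $\mathbb{C}[V]^G$ generated by homogeneous elements whose zero set in $V/\!\!/G$ is $A_s$ (here $A_0=\{0\}$). The multiplicity $m(g)$ at $0$ of a continuous function $g$ defined near $0\in\mathbb{R}$ is the supremum of all integers $p$ such that $g(t)=t^p h(t)$ near $0$ with $h$ continuous. *)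

theory Defs
  imports "HOL-Analysis.Analysis" "HOL-Library.Extended_Nat"
begin

inductive polyfun_on :: "'i set \<Rightarrow> (('i \<Rightarrow> complex) \<Rightarrow> complex) \<Rightarrow> bool"
  for I :: "'i set" where
  pf_const: "polyfun_on I (\<lambda>x. c)"
| pf_coord: "i \<in> I \<Longrightarrow> polyfun_on I (\<lambda>x. x i)"
| pf_add: "polyfun_on I p \<Longrightarrow> polyfun_on I q \<Longrightarrow> polyfun_on I (\<lambda>x. p x + q x)"
| pf_mult: "polyfun_on I p \<Longrightarrow> polyfun_on I q \<Longrightarrow> polyfun_on I (\<lambda>x. p x * q x)"

definition poly_V :: "(complex ^ 'v \<Rightarrow> complex) \<Rightarrow> bool" where
  "poly_V f \<longleftrightarrow> (\<exists>p. polyfun_on (UNIV :: 'v set) p \<and> (\<forall>v. f v = p (\<lambda>i. v $ i)))"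

definition homog_V :: "nat \<Rightarrow> (complex ^ 'v \<Rightarrow> complex) \<Rightarrow> bool" where
  "homog_V k f \<longleftrightarrow> poly_V f \<and> (\<forall>t v. f (t *s v) = t ^ k * f v)"

definition inv_ring :: "(complex ^ 'v ^ 'v) set \<Rightarrow> (complex ^ 'v \<Rightarrow> complex) set" where
  "inv_ring G = {f. poly_V f \<and> (\<forall>A\<in>G. \<forall>v. f (A *v v) = f v)}"

inductive_set ideal_gen :: "('a \<Rightarrow> complex) set \<Rightarrow> ('a \<Rightarrow> complex) set \<Rightarrow> ('a \<Rightarrow> complex) set"
  for R S where
  ig_zero: "(\<lambda>x. 0) \<in> ideal_gen R S"
| ig_gen: "s \<in> S \<Longrightarrow> s \<in> ideal_gen R S"
| ig_add: "a \<in> ideal_gen R S \<Longrightarrow> b \<in> ideal_gen R S \<Longrightarrow> (\<lambda>x. a x + b x) \<in> ideal_gen R S"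
| ig_mult: "r \<in> R \<Longrightarrow> a \<in> ideal_gen R S \<Longrightarrow> (\<lambda>x. r x * a x) \<in> ideal_gen R S"

definition Ck_on :: "nat \<Rightarrow> real set \<Rightarrow> (real \<Rightarrow> complex) \<Rightarrow> bool" where
  "Ck_on k I f \<longleftrightarrow> (\<exists>D :: nat \<Rightarrow> real \<Rightarrow> complex.
      (\<forall>t\<in>I. D 0 t = f t) \<and>
      (\<forall>j<k. \<forall>t\<in>I. (D j has_vector_derivative D (Suc j) t) (at t)) \<and>
      continuous_on I (D k))"

definition mult0 :: "(real \<Rightarrow> complex) \<Rightarrow> enat" where
  "mult0 g = Sup {enat p | p. \<exists>h \<epsilon>. \<epsilon> > 0 \<and> continuous_on (ball 0 \<epsilon>) h \<and>
                      (\<forall>t \<in> ball 0 \<epsilon>. g t = (complex_of_real t) ^ p * h t)}"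

end

theory Submission
  imports Defs "HOL-Computational_Algebra.Polynomial"
begin


lemma polyfun_local: "polyfun_on I p \<Longrightarrow> (\<forall>i\<in>I. x i = y i) \<Longrightarrow> p x = p y"
  by (induction rule: polyfun_on.induct) auto

lemma polyfun_cont:
  assumes "polyfun_on I p" "\<And>i. i\<in>I \<Longrightarrow> continuous_on S (\<lambda>t. X t i)"
  shows "continuous_on S (\<lambda>t. p (X t))"
  using assms by (induction rule: polyfun_on.induct) (auto intro!: continuous_intros)

lemma polyfun_sum:
  assumes "finite A" "\<And>a. a\<in>A \<Longrightarrow> polyfun_on I (P a)"
  shows "polyfun_on I (\<lambda>x. \<Sum>a\<in>A. P a x)"
  using assms
proof (induction A rule: finite_induct)
  case empty then show ?case by (simp add: pf_const)
next
  case (insert a A) then show ?case by (simp add: pf_add)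
qed

lemma polyfun_prod:
  assumes "finite A" "\<And>a. a\<in>A \<Longrightarrow> polyfun_on I (P a)"
  shows "polyfun_on I (\<lambda>x. \<Prod>a\<in>A. P a x)"
  using assms
proof (induction A rule: finite_induct)
  case empty then show ?case by (simp add: pf_const)
next
  case (insert a A) then show ?case by (simp add: pf_mult)
qed

lemma poly_V_cont: "poly_V f \<Longrightarrow> continuous_on UNIV f"
proof -
  assume "poly_V f"
  then obtain p where p: "polyfun_on UNIV p" "\<forall>v. f v = p (\<lambda>i. v $ i)" unfolding poly_V_def by blast
  have "continuous_on UNIV (\<lambda>v. p (\<lambda>i. v $ i))"
    by (rule polyfun_cont[OF p(1)]) (auto intro!: continuous_intros)
  moreover have "f = (\<lambda>v. p (\<lambda>i. v $ i))" using p(2) by auto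
  ultimately show ?thesis by simp
qed

lemma mult0_ge_intro:
  assumes "\<epsilon> > 0" "continuous_on (ball 0 \<epsilon>) h" "\<forall>t\<in>ball 0 \<epsilon>. g t = (complex_of_real t) ^ k * h t"
  shows "enat k \<le> mult0 g"
  unfolding mult0_def by (rule Sup_upper) (use assms in blast)

lemma mult0_ge_elim:
  assumes "k > 0" "enat k \<le> mult0 g"
  shows "\<exists>h \<epsilon>. \<epsilon> > 0 \<and> continuous_on (ball 0 \<epsilon>) h \<and> (\<forall>t\<in>ball 0 \<epsilon>. g t = (complex_of_real t) ^ k * h t)"
proof -
  let ?P = "{enat p | p. \<exists>h \<epsilon>. \<epsilon> > 0 \<and> continuous_on (ball 0 \<epsilon>) h \<and>
                      (\<forall>t \<in> ball 0 \<epsilon>. g t = (complex_of_real t) ^ p * h t)}"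
  have "\<exists>x\<in>?P. enat k \<le> x"
  proof (rule ccontr)
    assume "\<not> ?thesis"
    then have "\<forall>x\<in>?P. x \<le> enat (k - 1)"
      using assms(1) by (auto simp: not_le) (metis Suc_pred enat_ord_simps(2) less_Suc_eq_le)
    then have "Sup ?P \<le> enat (k - 1)" by (intro Sup_least) blast
    then have "enat k \<le> enat (k - 1)" using assms(2) unfolding mult0_def by (rule order.trans[rotated])
    then show False using assms(1) by simp
  qed
  then obtain p h \<epsilon> where p: "k \<le> p" "\<epsilon> > 0" "continuous_on (ball 0 \<epsilon>) h"
     "\<forall>t \<in> ball 0 \<epsilon>. g t = (complex_of_real t) ^ p * h t" by auto
  show ?thesis
  proof (intro exI conjI)
    show "continuous_on (ball 0 \<epsilon>) (\<lambda>t. (complex_of_real t) ^ (p - k) * h t)"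
      using p(3) by (auto intro!: continuous_intros)
    show "\<forall>t\<in>ball 0 \<epsilon>. g t = (complex_of_real t) ^ k * ((complex_of_real t) ^ (p - k) * h t)"
      using p(1,4) by (metis le_add_diff_inverse mult.assoc power_add)
  qed (use p in auto)
qed

lemma mult_bound:
  assumes "\<epsilon> > 0" "continuous_on (ball 0 \<epsilon>) h" "\<forall>t\<in>ball 0 \<epsilon>. g t = (complex_of_real t) ^ k * h t"
  shows "\<exists>e M. e > 0 \<and> M \<ge> 0 \<and> (\<forall>t. \<bar>t\<bar> < e \<longrightarrow> norm (g t) \<le> M * \<bar>t\<bar> ^ k)"
proof -
  have "compact (h ` cball 0 (\<epsilon>/2))"
    by (rule compact_continuous_image) (use assms(1,2) in \<open>auto intro: continuous_on_subset\<close>)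
  then obtain M where M: "M > 0" "\<forall>y\<in>h ` cball 0 (\<epsilon>/2). norm y \<le> M"
    using compact_imp_bounded bounded_pos by metis
  show ?thesis
  proof (intro exI conjI allI impI)
    fix t :: real assume t: "\<bar>t\<bar> < \<epsilon>/2"
    then have "t \<in> ball 0 \<epsilon>" "t \<in> cball 0 (\<epsilon>/2)" by auto
    then have "norm (g t) = \<bar>t\<bar> ^ k * norm (h t)" using assms(3) by (simp add: norm_mult norm_power)
    also have "\<dots> \<le> \<bar>t\<bar> ^ k * M" using M \<open>t \<in> cball 0 (\<epsilon>/2)\<close> by (intro mult_left_mono) auto
    finally show "norm (g t) \<le> M * \<bar>t\<bar> ^ k" by (simp add: mult.commute)
  qed (use M assms in auto)
qed



lemma Re_deriv:
  assumes "(f has_vector_derivative f') (at t)"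
  shows "((\<lambda>t. Re (f t)) has_real_derivative Re f') (at t)"
proof -
  have "((\<lambda>t. Re (f t)) has_derivative (\<lambda>x. Re (x *\<^sub>R f'))) (at t)"
    using bounded_linear.has_derivative[OF bounded_linear_Re assms[unfolded has_vector_derivative_def]] .
  moreover have "(\<lambda>x. Re (x *\<^sub>R f')) = (*) (Re f')" by (auto simp: fun_eq_iff)
  ultimately show ?thesis by (simp add: has_field_derivative_def)
qed

lemma Im_deriv:
  assumes "(f has_vector_derivative f') (at t)"
  shows "((\<lambda>t. Im (f t)) has_real_derivative Im f') (at t)"
proof -
  have "((\<lambda>t. Im (f t)) has_derivative (\<lambda>x. Im (x *\<^sub>R f'))) (at t)"
    using bounded_linear.has_derivative[OF bounded_linear_Im assms[unfolded has_vector_derivative_def]] .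
  moreover have "(\<lambda>x. Im (x *\<^sub>R f')) = (*) (Im f')" by (auto simp: fun_eq_iff)
  ultimately show ?thesis by (simp add: has_field_derivative_def)
qed

lemma taylor_lim_real:
  fixes g :: "nat \<Rightarrow> real \<Rightarrow> real"
  assumes e: "e > 0" and n: "n > 0"
    and der: "\<forall>m<n. \<forall>t. \<bar>t\<bar> \<le> e \<longrightarrow> DERIV (g m) t :> g (Suc m) t"
    and cont: "isCont (g n) 0" and z: "\<forall>j<n. g j 0 = 0"
  shows "((\<lambda>t. g 0 t / t^n) \<longlongrightarrow> g n 0 / fact n) (at 0)"
  unfolding LIM_eq
proof (intro allI impI)
  fix r :: real assume r: "r > 0"
  have "r * fact n > 0" using r by simp
  then obtain s where s: "s > 0" "\<forall>x. x \<noteq> 0 \<and> norm (x - 0) < s \<longrightarrow> norm (g n x - g n 0) < r * fact n"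
    using cont[unfolded isCont_def LIM_eq] by blast
  show "\<exists>s>0. \<forall>x. x \<noteq> 0 \<and> norm (x - 0) < s \<longrightarrow> norm (g 0 x / x ^ n - g n 0 / fact n) < r"
  proof (intro exI[of _ "min s e"] conjI allI impI)
    fix x :: real assume x: "x \<noteq> 0 \<and> norm (x - 0) < min s e"
    have "\<exists>t. (if x < 0 then x < t \<and> t < 0 else 0 < t \<and> t < x) \<and>
      g 0 x = (\<Sum>m<n. (g m 0 / fact m) * (x - 0)^m) + (g n t / fact n) * (x - 0)^n"
      by (rule Taylor[of n g "g 0" "-e" e 0 x]) (use n der x e in auto)
    then obtain t where t0: "(if x < 0 then x < t \<and> t < 0 else 0 < t \<and> t < x)"
      "g 0 x = (\<Sum>m<n. (g m 0 / fact m) * (x - 0)^m) + (g n t / fact n) * (x - 0)^n" by blast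
    have t: "\<bar>t\<bar> < \<bar>x\<bar>" using t0(1) by (auto split: if_splits)
    have "g 0 x = (g n t / fact n) * x^n" using t0(2) z by simp
    have "g 0 x / x ^ n - g n 0 / fact n = (g n t - g n 0) / fact n"
      using \<open>g 0 x = (g n t / fact n) * x^n\<close> x by (simp add: field_simps)
    moreover have "\<bar>g n t - g n 0\<bar> < r * fact n"
    proof (cases "t = 0")
      case True then show ?thesis using r by simp
    next
      case False then show ?thesis using s(2)[rule_format, of t] t x by auto
    qed
    ultimately show "norm (g 0 x / x ^ n - g n 0 / fact n) < r"
      by (simp add: abs_divide divide_less_eq)
  qed (use s e in auto)
qed

lemma taylor_lim:
  fixes D :: "nat \<Rightarrow> real \<Rightarrow> complex"
  assumes e: "e > 0" and n: "n > 0"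
    and der: "\<forall>m<n. \<forall>t. \<bar>t\<bar> \<le> e \<longrightarrow> (D m has_vector_derivative D (Suc m) t) (at t)"
    and cont: "isCont (D n) 0" and z: "\<forall>j<n. D j 0 = 0"
  shows "((\<lambda>t. D 0 t / (complex_of_real t)^n) \<longlongrightarrow> D n 0 / fact n) (at 0)"
proof -
  have 1: "((\<lambda>t. Re (D 0 t) / t^n) \<longlongrightarrow> Re (D n 0) / fact n) (at 0)"
    using taylor_lim_real[of e n "\<lambda>m t. Re (D m t)"] e n der cont z Re_deriv
    by (auto intro: continuous_intros)
  have 2: "((\<lambda>t. Im (D 0 t) / t^n) \<longlongrightarrow> Im (D n 0) / fact n) (at 0)"
    using taylor_lim_real[of e n "\<lambda>m t. Im (D m t)"] e n der cont z Im_deriv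
    by (auto intro: continuous_intros)
  have r: "(complex_of_real t)^n = complex_of_real (t^n)" for t by simp
  have f: "(fact n :: complex) = complex_of_real (fact n)" by simp
  show ?thesis unfolding tendsto_complex_iff r f Re_divide_of_real Im_divide_of_real
    using 1 2 by simp
qed

lemma flat_mult:
  fixes D :: "nat \<Rightarrow> real \<Rightarrow> complex"
  assumes e: "e > 0" and m: "m > 0"
    and der: "\<forall>j<m. \<forall>t. \<bar>t\<bar> \<le> e \<longrightarrow> (D j has_vector_derivative D (Suc j) t) (at t)"
    and cont: "isCont (D m) 0" and bnd: "\<forall>t. \<bar>t\<bar> < e \<longrightarrow> norm (D 0 t) \<le> K * \<bar>t\<bar>^m"
  shows "\<exists>h \<epsilon>. \<epsilon> > 0 \<and> continuous_on (ball 0 \<epsilon>) h \<and> (\<forall>t\<in>ball 0 \<epsilon>. D 0 t = (complex_of_real t) ^ m * h t)"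
proof -
  have ic: "isCont (D j) t" if "j < m" "\<bar>t\<bar> \<le> e" for j t
    using der that has_vector_derivative_continuous by blast
  have zero: "\<forall>j<m. D j 0 = 0"
  proof (rule allI, induct_tac j rule: nat_less_induct, rule impI)
    fix j assume IH: "\<forall>i<j. i < m \<longrightarrow> D i 0 = 0" and jm: "j < m"
    show "D j 0 = 0"
    proof (cases "j = 0")
      case True
      then show ?thesis using bnd[rule_format, of 0] e m by (simp add: zero_power)
    next
      case False
      have L1: "((\<lambda>t. D 0 t / (complex_of_real t)^j) \<longlongrightarrow> D j 0 / fact j) (at 0)"
        by (rule taylor_lim[OF e]) (use False der jm IH ic e in auto)
      have L2: "((\<lambda>t. D 0 t / (complex_of_real t)^j) \<longlongrightarrow> 0) (at 0)"
      proof (rule Lim_null_comparison)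
        have ev: "eventually (\<lambda>t. t \<noteq> 0 \<and> \<bar>t\<bar> < e) (at (0::real))"
          using e by (auto simp: eventually_at intro!: exI[of _ e])
        show "eventually (\<lambda>t. norm (D 0 t / (complex_of_real t)^j) \<le> K * \<bar>t\<bar>^(m - j)) (at 0)"
        proof (rule eventually_mono[OF ev])
          fix t :: real assume t: "t \<noteq> 0 \<and> \<bar>t\<bar> < e"
          have "norm (D 0 t / (complex_of_real t)^j) = norm (D 0 t) / \<bar>t\<bar>^j"
            by (simp add: norm_divide norm_power)
          also have "\<dots> \<le> K * \<bar>t\<bar>^m / \<bar>t\<bar>^j"
            using bnd t by (intro divide_right_mono) auto
          also have "\<dots> = K * \<bar>t\<bar>^(m - j)"
            using t jm by (simp add: power_diff)
          finally show "norm (D 0 t / (complex_of_real t)^j) \<le> K * \<bar>t\<bar>^(m - j)" .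
        qed
        have "((\<lambda>t. K * \<bar>t\<bar>^(m - j)) \<longlongrightarrow> K * \<bar>0\<bar>^(m - j)) (at (0::real))"
          by (intro tendsto_intros)
        then show "((\<lambda>t. K * \<bar>t\<bar>^(m - j)) \<longlongrightarrow> 0) (at (0::real))" using jm by (simp add: zero_power)
      qed
      have "D j 0 / fact j = 0" using tendsto_unique[OF _ L1 L2] by simp
      then show ?thesis by simp
    qed
  qed
  have L: "((\<lambda>t. D 0 t / (complex_of_real t)^m) \<longlongrightarrow> D m 0 / fact m) (at 0)"
    by (rule taylor_lim[OF e m]) (use der cont zero in auto)
  define h where "h t = (if t = 0 then D m 0 / fact m else D 0 t / (complex_of_real t)^m)" for t
  show ?thesis
  proof (intro exI conjI)
    show "continuous_on (ball 0 e) h"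
    proof (rule continuous_at_imp_continuous_on, rule ballI)
      fix t :: real assume t: "t \<in> ball 0 e"
      show "isCont h t"
      proof (cases "t = 0")
        case True
        have "eventually (\<lambda>x. D 0 x / (complex_of_real x)^m = h x) (at (0::real))"
          by (auto simp: h_def eventually_at intro!: exI[of _ 1])
        then have "(h \<longlongrightarrow> D m 0 / fact m) (at 0)" using L by (rule tendsto_cong[THEN iffD1])
        then have "(h \<longlongrightarrow> h 0) (at 0)" by (simp add: h_def)
        then show ?thesis using True by (simp add: isCont_def)
      next
        case False
        have "isCont (\<lambda>x. D 0 x / (complex_of_real x)^m) t"
          using ic[of 0 t] m t False by (auto intro!: continuous_intros)
        moreover have "eventually (\<lambda>x. h x = D 0 x / (complex_of_real x)^m) (nhds t)"
          using t1_space_nhds[OF False] by (rule eventually_mono) (simp add: h_def)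
        ultimately show ?thesis by (simp add: isCont_cong)
      qed
    qed
    show "\<forall>t\<in>ball 0 e. D 0 t = (complex_of_real t) ^ m * h t"
      using zero m by (auto simp: h_def)
  qed (use e in auto)
qed



lemma homog_zero: "homog_V d f \<Longrightarrow> d > 0 \<Longrightarrow> f 0 = 0"
  unfolding homog_V_def by (metis vector_smult_lzero mult_zero_left zero_power)

lemma homog_deg0_const: "homog_V 0 f \<Longrightarrow> f v = f 0"
  unfolding homog_V_def by (metis vector_smult_lzero mult_1 power_0)

lemma lin_form_exists:
  fixes W :: "(complex ^ 'v) set"
  assumes "finite W" "0 \<notin> W"
  shows "\<exists>s::complex. \<forall>w\<in>W. (\<Sum>i\<in>UNIV. w $ i * s ^ to_nat i) \<noteq> 0"
proof -
  define q where "q w = (\<Sum>i\<in>UNIV. monom (w $ i) (to_nat i))" for w :: "complex ^ 'v"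
  have pq: "poly (q w) s = (\<Sum>i\<in>UNIV. w $ i * s ^ to_nat i)" for w s
    by (simp add: q_def poly_sum poly_monom)
  have qnz: "q w \<noteq> 0" if "w \<noteq> 0" for w
  proof -
    obtain i0 where i0: "w $ i0 \<noteq> 0" using \<open>w \<noteq> 0\<close> by (metis vec_eq_iff zero_index)
    have "coeff (q w) (to_nat i0) = (\<Sum>i\<in>UNIV. if to_nat i0 = to_nat i then w $ i else 0)"
      by (simp add: q_def coeff_sum coeff_monom)
    also have "\<dots> = (\<Sum>i\<in>{i0}. w $ i)"
      by (rule sum.mono_neutral_cong_right) (auto dest: injD[OF inj_to_nat])
    finally have "coeff (q w) (to_nat i0) \<noteq> 0" using i0 by simp
    then show ?thesis by auto
  qed
  have "finite (\<Union>w\<in>W. {s. poly (q w) s = 0})"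
  proof (rule finite_UN_I[OF assms(1)])
    fix w assume "w \<in> W"
    then have "w \<noteq> 0" using assms(2) by auto
    then show "finite {s. poly (q w) s = 0}" by (intro poly_roots_finite qnz)
  qed
  then obtain s where "s \<notin> (\<Union>w\<in>W. {s. poly (q w) s = 0})"
    using ex_new_if_finite[OF infinite_UNIV_char_0] by blast
  then show ?thesis using pq by auto
qed

lemma nullcone:
  fixes G :: "(complex ^ 'v ^ 'v) set"
    and \<sigma> :: "nat \<Rightarrow> complex ^ 'v \<Rightarrow> complex"
  assumes G_fin: "finite G"
    and G_one: "mat 1 \<in> G"
    and G_mult: "\<forall>A\<in>G. \<forall>B\<in>G. A ** B \<in> G"
    and G_inv: "\<forall>A\<in>G. invertible A"
    and \<sigma>_gen: "\<forall>f \<in> inv_ring G. \<exists>p. polyfun_on {..<n} p \<and> (\<forall>v. f v = p (\<lambda>j. \<sigma> j v))"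
    and \<sigma>0: "\<forall>j<n. \<sigma> j 0 = 0"
    and v: "v \<noteq> 0"
  shows "\<exists>j<n. \<sigma> j v \<noteq> 0"
proof (rule ccontr)
  assume H: "\<not> ?thesis"
  have Av: "A *v v \<noteq> 0" if "A \<in> G" for A
  proof
    assume "A *v v = 0"
    have "invertible A" using G_inv that by simp
    then obtain A' where "A' ** A = mat 1" unfolding invertible_def by auto
    then have "v = A' *v (A *v v)" by (simp add: matrix_vector_mul_assoc)
    with \<open>A *v v = 0\<close> v show False by simp
  qed
  obtain s :: complex where s: "\<forall>w\<in>(\<lambda>A. A *v v) ` G. (\<Sum>i\<in>UNIV. w $ i * s ^ to_nat i) \<noteq> 0"
  proof -
    have "0 \<notin> (\<lambda>A. A *v v) ` G" using Av by force
    then show ?thesis using lin_form_exists[of "(\<lambda>A. A *v v) ` G"] G_fin that by blast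
  qed
  define l where "l x = (\<Sum>i\<in>UNIV. x $ i * s ^ to_nat i)" for x :: "complex ^ 'v"
  define f where "f x = (\<Prod>A\<in>G. l (A *v x))" for x
  have fpoly: "poly_V f"
    unfolding poly_V_def
  proof (intro exI conjI allI)
    show "polyfun_on UNIV (\<lambda>y. \<Prod>A\<in>G. \<Sum>i\<in>UNIV. (\<Sum>j\<in>UNIV. A $ i $ j * y j) * s ^ to_nat i)"
      using G_fin by (intro polyfun_prod polyfun_sum pf_mult pf_const pf_coord) auto
    fix x
    show "f x = (\<Prod>A\<in>G. \<Sum>i\<in>UNIV. (\<Sum>j\<in>UNIV. A $ i $ j * (x $ j)) * s ^ to_nat i)"
      by (simp add: f_def l_def matrix_vector_mult_def)
  qed
  have finv: "f (B *v x) = f x" if B: "B \<in> G" for B x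
  proof -
    have "invertible B" using G_inv B by simp
    then obtain B' where B': "B ** B' = mat 1" unfolding invertible_def by auto
    have inj: "inj_on (\<lambda>A. A ** B) G"
    proof
      fix A1 A2 assume "A1 ** B = A2 ** B"
      then have "A1 ** B ** B' = A2 ** B ** B'" by simp
      then have "A1 ** (B ** B') = A2 ** (B ** B')" by (simp only: matrix_mul_assoc)
      then show "A1 = A2" using B' by simp
    qed
    have img: "(\<lambda>A. A ** B) ` G = G"
      by (rule card_subset_eq[OF G_fin]) (use G_mult B in \<open>auto simp: card_image[OF inj]\<close>)
    have "f (B *v x) = (\<Prod>A\<in>G. l ((A ** B) *v x))"
      by (simp add: f_def matrix_vector_mul_assoc)
    also have "\<dots> = (\<Prod>A\<in>(\<lambda>A. A ** B) ` G. l (A *v x))"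
      by (rule prod.reindex[OF inj, symmetric, unfolded comp_def])
    also have "\<dots> = f x" by (simp add: img f_def)
    finally show ?thesis .
  qed
  have "f \<in> inv_ring G" using fpoly finv by (auto simp: inv_ring_def)
  then obtain p where p: "polyfun_on {..<n} p" "\<forall>v. f v = p (\<lambda>j. \<sigma> j v)" using \<sigma>_gen by blast
  have "f v = p (\<lambda>j. \<sigma> j 0)" using p H \<sigma>0 by (auto intro: polyfun_local)
  also have "\<dots> = f 0" using p by simp
  also have "\<dots> = 0" unfolding f_def
  proof (rule prod_zero[OF G_fin], rule bexI[OF _ G_one])
    show "l (mat 1 *v 0) = 0" by (simp add: l_def)
  qed
  finally have "f v = 0" .
  moreover have "f v \<noteq> 0" using G_fin s by (auto simp: f_def l_def)
  ultimately show False by simp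
qed



lemma norm_ofreal_smult: "norm (complex_of_real r *s (v :: complex^'v)) = \<bar>r\<bar> * norm v"
proof -
  have "complex_of_real r *s v = r *\<^sub>R v" unfolding vec_eq_iff vector_scaleR_component vector_smult_component
    by (simp only: scaleR_conv_of_real simp_thms)
  then show ?thesis by simp
qed

lemma unit_decomp:
  fixes v :: "complex ^ 'v"
  assumes "v \<noteq> 0"
  shows "\<exists>u. norm u = 1 \<and> v = complex_of_real (norm v) *s u"
proof (intro exI conjI)
  let ?u = "complex_of_real (1 / norm v) *s v"
  show "norm ?u = 1" using assms by (simp only: norm_ofreal_smult) simp
  have "complex_of_real (norm v) *s ?u = (complex_of_real (norm v) * complex_of_real (1 / norm v)) *s v"
    by (simp add: vector_smult_assoc)
  also have "\<dots> = v" using assms by simp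
  finally show "v = complex_of_real (norm v) *s ?u" by simp
qed

lemma homog_norm:
  assumes "homog_V k f" "norm u = 1"
  shows "norm (f (complex_of_real r *s u)) = \<bar>r\<bar> ^ k * norm (f u)"
  using assms unfolding homog_V_def by (simp add: norm_mult norm_power)

lemma homog_bound:
  fixes f :: "complex ^ 'v \<Rightarrow> complex"
  assumes "homog_V k f" "k > 0"
  shows "\<exists>B\<ge>0. \<forall>v. norm (f v) \<le> B * norm v ^ k"
proof -
  have "continuous_on UNIV f" using assms poly_V_cont unfolding homog_V_def by blast
  then have "compact (f ` sphere 0 1)"
    by (intro compact_continuous_image) (auto intro: continuous_on_subset)
  then obtain B where B: "B > 0" "\<forall>y\<in>f ` sphere 0 1. norm y \<le> B"
    using compact_imp_bounded bounded_pos by metis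
  show ?thesis
  proof (intro exI conjI allI)
    fix v :: "complex ^ 'v"
    show "norm (f v) \<le> B * norm v ^ k"
    proof (cases "v = 0")
      case True then show ?thesis using homog_zero[OF assms] assms(2) by (simp add: zero_power)
    next
      case False
      then obtain u where u: "norm u = 1" "v = complex_of_real (norm v) *s u" using unit_decomp by blast
      have "norm (f v) = norm v ^ k * norm (f u)"
        using homog_norm[OF assms(1) u(1), of "norm v"] u(2) by simp
      also have "\<dots> \<le> norm v ^ k * B" using B u(1) by (intro mult_left_mono) auto
      finally show ?thesis by (simp add: mult.commute)
    qed
  qed (use B in auto)
qed

lemma ideal_gen_vanish:
  assumes "f \<in> ideal_gen R S" "\<forall>s\<in>S. s v = 0"
  shows "f v = 0"
  using assms by (induction rule: ideal_gen.induct) auto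



theorem lemma6p2:
  fixes G :: "(complex ^ 'v ^ 'v) set"
    and n :: nat
    and \<sigma> :: "nat \<Rightarrow> complex ^ 'v \<Rightarrow> complex"
    and d :: "nat \<Rightarrow> nat"
    and J :: "(complex ^ 'v \<Rightarrow> complex) set"
    and I :: "real set"
    and c :: "nat \<Rightarrow> real \<Rightarrow> complex"
  assumes G_fin: "finite G"
    and G_one: "mat 1 \<in> G"
    and G_mult: "\<forall>A\<in>G. \<forall>B\<in>G. A ** B \<in> G"
    and G_inv: "\<forall>A\<in>G. invertible A"
    and no_fixed: "\<forall>v. (\<forall>A\<in>G. A *v v = v) \<longrightarrow> v = 0"
    and \<sigma>_inv: "\<forall>k<n. \<sigma> k \<in> inv_ring G"
    and \<sigma>_homog: "\<forall>k<n. homog_V (d k) (\<sigma> k)"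
    and \<sigma>_gen: "\<forall>f \<in> inv_ring G. \<exists>p. polyfun_on {..<n} p \<and> (\<forall>v. f v = p (\<lambda>j. \<sigma> j v))"
    and \<sigma>_minimal: "\<forall>k<n. \<not> (\<exists>p. polyfun_on ({..<n} - {k}) p \<and> (\<forall>v. \<sigma> k v = p (\<lambda>j. \<sigma> j v)))"
    and J_gen: "\<exists>S. S \<subseteq> {f \<in> inv_ring G. \<exists>k. homog_V k f} \<and> J = ideal_gen (inv_ring G) S"
    and J_zero: "\<forall>v. (\<forall>f\<in>J. f v = 0) \<longleftrightarrow> (\<forall>k<n. \<sigma> k v = 0)"
    and I_open: "open I" and I_interval: "is_interval I" and I_zero: "0 \<in> I"
    and c_smooth: "\<forall>k<n. Ck_on (Max (d ` {..<n})) I (c k)"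
    and c_in: "\<forall>t\<in>I. \<exists>v. \<forall>k<n. c k t = \<sigma> k v"
  shows "(\<forall>k<n. mult0 (c k) \<ge> enat (d k)) \<longleftrightarrow>
         (\<forall>f\<in>J. \<forall>k. homog_V k f \<longrightarrow>
            (\<forall>p. polyfun_on {..<n} p \<and> (\<forall>v. f v = p (\<lambda>j. \<sigma> j v)) \<longrightarrow>
                 mult0 (\<lambda>t. p (\<lambda>j. c j t)) \<ge> enat k))"
proof -
  have dpos: "\<forall>k<n. d k > 0"
  proof (intro allI impI)
    fix k assume k: "k < n"
    show "d k > 0"
    proof (rule ccontr)
      assume "\<not> d k > 0"
      then have d0: "d k = 0" by simp
      have "homog_V (d k) (\<sigma> k)" using \<sigma>_homog k by blast
      then have "homog_V 0 (\<sigma> k)" unfolding d0 .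
      then have "\<forall>v. \<sigma> k v = (\<lambda>x. \<sigma> k 0) (\<lambda>j. \<sigma> j v)" using homog_deg0_const by blast
      moreover have "polyfun_on ({..<n} - {k}) (\<lambda>x. \<sigma> k 0)" by (rule pf_const)
      ultimately show False using \<sigma>_minimal k by blast
    qed
  qed
  have \<sigma>0: "\<forall>j<n. \<sigma> j 0 = 0" using homog_zero \<sigma>_homog dpos by blast
  have J0: "\<forall>f\<in>J. f 0 = 0" using J_zero \<sigma>0 by blast
  obtain eI where eI: "eI > 0" "ball 0 eI \<subseteq> I" using I_open I_zero openE by blast
  show ?thesis
  proof
    assume L: "\<forall>k<n. mult0 (c k) \<ge> enat (d k)"
    show "\<forall>f\<in>J. \<forall>k. homog_V k f \<longrightarrow>
            (\<forall>p. polyfun_on {..<n} p \<and> (\<forall>v. f v = p (\<lambda>j. \<sigma> j v)) \<longrightarrow>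
                 mult0 (\<lambda>t. p (\<lambda>j. c j t)) \<ge> enat k)"
    proof (intro ballI allI impI, elim conjE)
      fix f k p assume fJ: "f \<in> J" and hk: "homog_V k f" and pp: "polyfun_on {..<n} p"
        and fp: "\<forall>v. f v = p (\<lambda>j. \<sigma> j v)"
      show "mult0 (\<lambda>t. p (\<lambda>j. c j t)) \<ge> enat k"
      proof (cases "k = 0")
        case True then show ?thesis by (simp add: zero_enat_def[symmetric])
      next
        case False
        have ex: "\<forall>j<n. \<exists>h \<epsilon>. \<epsilon> > 0 \<and> continuous_on (ball 0 \<epsilon>) h \<and>
              (\<forall>t\<in>ball 0 \<epsilon>. c j t = (complex_of_real t) ^ d j * h t)"
          using mult0_ge_elim dpos L by blast
        then obtain H E where HE: "\<forall>j<n. E j > 0 \<and> continuous_on (ball 0 (E j)) (H j) \<and>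
              (\<forall>t\<in>ball 0 (E j). c j t = (complex_of_real t) ^ d j * H j t)"
          by metis
        define \<epsilon> where "\<epsilon> = Min (insert eI (E ` {..<n}))"
        have \<epsilon>: "\<epsilon> > 0" "\<epsilon> \<le> eI" "\<forall>j<n. \<epsilon> \<le> E j"
          using HE eI by (auto simp: \<epsilon>_def)
        have ballI': "ball 0 \<epsilon> \<subseteq> ball 0 (E j)" if "j < n" for j using \<epsilon> that by auto
        show ?thesis
        proof (rule mult0_ge_intro[OF \<epsilon>(1)])
          show "continuous_on (ball 0 \<epsilon>) (\<lambda>t. p (\<lambda>j. H j t))"
          proof (rule polyfun_cont[OF pp])
            fix i assume "i \<in> {..<n}"
            then have i: "i < n" by simp
            have "continuous_on (ball 0 (E i)) (H i)" using HE i by blast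
            then show "continuous_on (ball 0 \<epsilon>) (\<lambda>t. H i t)"
              using continuous_on_subset[OF _ ballI'[OF i]] by simp
          qed
          show "\<forall>t\<in>ball 0 \<epsilon>. p (\<lambda>j. c j t) = (complex_of_real t) ^ k * p (\<lambda>j. H j t)"
          proof
            fix t :: real assume t: "t \<in> ball 0 \<epsilon>"
            then have tI: "t \<in> I" using \<epsilon> eI by auto
            have ct: "\<forall>j<n. c j t = (complex_of_real t) ^ d j * H j t"
              using HE t ballI' by blast
            show "p (\<lambda>j. c j t) = (complex_of_real t) ^ k * p (\<lambda>j. H j t)"
            proof (cases "t = 0")
              case True
              have "p (\<lambda>j. c j t) = p (\<lambda>j. \<sigma> j 0)"
                by (rule polyfun_local[OF pp]) (use ct True dpos \<sigma>0 in \<open>auto simp: zero_power\<close>)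
              also have "\<dots> = 0" using fp homog_zero[OF hk] False by simp
              finally show ?thesis using True False by (simp add: zero_power)
            next
              case tnz: False
              obtain v where v: "\<forall>j<n. c j t = \<sigma> j v" using c_in tI by blast
              define \<tau> where "\<tau> = complex_of_real t"
              have \<tau>: "\<tau> \<noteq> 0" using tnz by (simp add: \<tau>_def)
              define w where "w = (1 / \<tau>) *s v"
              have vw: "v = \<tau> *s w" using \<tau> by (simp add: w_def vector_smult_assoc)
              have sw: "\<sigma> j w = H j t" if j: "j < n" for j
              proof -
                have "\<sigma> j v = \<tau> ^ d j * \<sigma> j w"
                  using \<sigma>_homog j vw unfolding homog_V_def by simp
                moreover have "\<sigma> j v = \<tau> ^ d j * H j t" using v ct j by (simp add: \<tau>_def)
                ultimately show ?thesis using \<tau> by simp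
              qed
              have "p (\<lambda>j. c j t) = p (\<lambda>j. \<sigma> j v)" by (rule polyfun_local[OF pp]) (use v in auto)
              also have "\<dots> = f v" using fp by simp
              also have "\<dots> = \<tau> ^ k * f w" using hk vw unfolding homog_V_def by simp
              also have "f w = p (\<lambda>j. H j t)"
                using fp polyfun_local[OF pp, of "\<lambda>j. \<sigma> j w" "\<lambda>j. H j t"] sw by simp
              finally show ?thesis by (simp add: \<tau>_def)
            qed
          qed
        qed
      qed
    qed
  next
    assume R: "\<forall>f\<in>J. \<forall>k. homog_V k f \<longrightarrow>
            (\<forall>p. polyfun_on {..<n} p \<and> (\<forall>v. f v = p (\<lambda>j. \<sigma> j v)) \<longrightarrow>
                 mult0 (\<lambda>t. p (\<lambda>j. c j t)) \<ge> enat k)"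
    show "\<forall>k<n. mult0 (c k) \<ge> enat (d k)"
    proof -
      obtain S where S: "S \<subseteq> {f \<in> inv_ring G. \<exists>k. homog_V k f}" "J = ideal_gen (inv_ring G) S"
        using J_gen by blast
      have SJ: "s \<in> J" if "s \<in> S" for s unfolding S(2) by (rule ig_gen[OF that])
      have Sinv: "s \<in> inv_ring G" if "s \<in> S" for s using S(1) that by auto
      define K where "K s = (SOME k. homog_V k s)" for s :: "complex^'v \<Rightarrow> complex"
      have SK: "homog_V (K s) s" if "s \<in> S" for s
      proof -
        have "\<exists>k. homog_V k s" using S(1) that by blast
        then show ?thesis unfolding K_def by (rule someI_ex)
      qed
      have Scont: "continuous_on UNIV s" if "s \<in> S" for s
        using Sinv[OF that] unfolding inv_ring_def by (auto intro: poly_V_cont)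
      have nz: "\<exists>s\<in>S. s v \<noteq> 0" if v: "v \<noteq> 0" for v
      proof -
        obtain j where j: "j < n" "\<sigma> j v \<noteq> 0"
          using nullcone[OF G_fin G_one G_mult G_inv \<sigma>_gen \<sigma>0 v] by blast
        then have "\<not> (\<forall>f\<in>J. f v = 0)" using J_zero[rule_format, of v] by auto
        then obtain f where f: "f \<in> J" "f v \<noteq> 0" by blast
        show ?thesis
        proof (rule ccontr)
          assume "\<not> ?thesis"
          then have "\<forall>s\<in>S. s v = 0" by blast
          then have "f v = 0" using ideal_gen_vanish[OF f(1)[unfolded S(2)]] by simp
          with f(2) show False by simp
        qed
      qed
      have cover: "sphere (0::complex^'v) 1 \<subseteq> (\<Union>x\<in>S \<times> {0<..}. {w. snd x < norm (fst x w)})"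
      proof
        fix u :: "complex^'v" assume "u \<in> sphere 0 1"
        then have "u \<noteq> 0" by auto
        then obtain s where s: "s \<in> S" "s u \<noteq> 0" using nz by blast
        then have "(s, norm (s u) / 2) \<in> S \<times> {0<..}" "u \<in> {w. snd (s, norm (s u) / 2) < norm (fst (s, norm (s u) / 2) w)}"
          by auto
        then show "u \<in> (\<Union>x\<in>S \<times> {0<..}. {w. snd x < norm (fst x w)})" by blast
      qed
      have opn: "open {w. snd x < norm (fst x w)}" if "x \<in> S \<times> {0<..}" for x
      proof (rule open_Collect_less)
        show "continuous_on UNIV (\<lambda>w::complex^'v. snd x)" by (rule continuous_on_const)
        have "continuous_on UNIV (fst x)" using Scont that by auto
        then show "continuous_on UNIV (\<lambda>w. norm (fst x w))" by (intro continuous_intros)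
      qed
      obtain F where F: "F \<subseteq> S \<times> {0<..}" "finite F" "sphere (0::complex^'v) 1 \<subseteq> (\<Union>x\<in>F. {w. snd x < norm (fst x w)})"
        using compactE_image[OF compact_sphere opn cover] by blast
      define \<delta> where "\<delta> = Min (insert 1 (snd ` F))"
      have \<delta>: "\<delta> > 0" "\<forall>x\<in>F. \<delta> \<le> snd x" using F(1,2) by (auto simp: \<delta>_def)
      define S0 where "S0 = fst ` F"
      have S0: "finite S0" "S0 \<subseteq> S" using F(1,2) by (auto simp: S0_def)
      have sph: "\<exists>s\<in>S0. \<delta> < norm (s u)" if "norm u = 1" for u
      proof -
        have "u \<in> sphere 0 1" using that by simp
        then obtain x where "x \<in> F" "snd x < norm (fst x u)" using F(3) by blast
        then show ?thesis using \<delta>(2) unfolding S0_def by force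
      qed
      have bnd: "\<forall>s\<in>S0. \<exists>e M. e > 0 \<and> M \<ge> 0 \<and> (\<forall>t v. \<bar>t\<bar> < e \<longrightarrow> t \<in> I \<longrightarrow>
                  (\<forall>j<n. c j t = \<sigma> j v) \<longrightarrow> norm (s v) \<le> M * \<bar>t\<bar> ^ K s)"
      proof
        fix s assume "s \<in> S0"
        then have sS: "s \<in> S" using S0 by blast
        show "\<exists>e M. e > 0 \<and> M \<ge> 0 \<and> (\<forall>t v. \<bar>t\<bar> < e \<longrightarrow> t \<in> I \<longrightarrow>
                  (\<forall>j<n. c j t = \<sigma> j v) \<longrightarrow> norm (s v) \<le> M * \<bar>t\<bar> ^ K s)"
        proof (cases "K s = 0")
          case True
          have "s v = 0" for v
            using homog_deg0_const[of s v] SK[OF sS] True J0 SJ[OF sS] by simp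
          then show ?thesis by (intro exI[of _ 1] exI[of _ 0]) simp
        next
          case False
          obtain p where p: "polyfun_on {..<n} p" "\<forall>v. s v = p (\<lambda>j. \<sigma> j v)"
            using \<sigma>_gen Sinv[OF sS] by blast
          have "mult0 (\<lambda>t. p (\<lambda>j. c j t)) \<ge> enat (K s)"
            using R[rule_format, OF SJ[OF sS] SK[OF sS]] p by simp
          moreover have Kp: "K s > 0" using False by simp
          ultimately obtain h \<epsilon> where h: "\<epsilon> > 0" "continuous_on (ball 0 \<epsilon>) h"
              "\<forall>t\<in>ball 0 \<epsilon>. p (\<lambda>j. c j t) = (complex_of_real t) ^ K s * h t"
            using mult0_ge_elim[OF Kp] by blast
          obtain e M where eM: "e > 0" "M \<ge> 0" "\<forall>t. \<bar>t\<bar> < e \<longrightarrow> norm (p (\<lambda>j. c j t)) \<le> M * \<bar>t\<bar> ^ K s"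
            using mult_bound[OF h] by blast
          show ?thesis
          proof (intro exI conjI allI impI)
            fix t v assume t: "\<bar>t\<bar> < e" and cv: "\<forall>j<n. c j t = \<sigma> j v"
            have "s v = p (\<lambda>j. c j t)" using p(2) polyfun_local[OF p(1), of "\<lambda>j. \<sigma> j v" "\<lambda>j. c j t"] cv by simp
            then show "norm (s v) \<le> M * \<bar>t\<bar> ^ K s" using eM t by simp
          qed (use eM in simp_all)
        qed
      qed
      then obtain E M where EM: "\<forall>s\<in>S0. E s > 0 \<and> M s \<ge> 0 \<and> (\<forall>t v. \<bar>t\<bar> < E s \<longrightarrow> t \<in> I \<longrightarrow>
                  (\<forall>j<n. c j t = \<sigma> j v) \<longrightarrow> norm (s v) \<le> M s * \<bar>t\<bar> ^ K s)"
        by metis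
      define \<epsilon>1 where "\<epsilon>1 = Min (insert eI (E ` S0))"
      have \<epsilon>1: "\<epsilon>1 > 0" "\<epsilon>1 \<le> eI" "\<forall>s\<in>S0. \<epsilon>1 \<le> E s"
        using EM eI S0(1) by (auto simp: \<epsilon>1_def)
      define C where "C = 1 + (\<Sum>s\<in>S0. M s) / \<delta>"
      have Msum: "M s \<le> (\<Sum>s\<in>S0. M s)" if "s \<in> S0" for s
        using EM that S0(1) by (intro member_le_sum) auto
      have "0 \<le> (\<Sum>s\<in>S0. M s)" using EM by (intro sum_nonneg) auto
      then have C1: "C \<ge> 1" using \<delta>(1) by (simp add: C_def)
      have CM: "M s \<le> \<delta> * C" if "s \<in> S0" for s
      proof -
        have "M s / \<delta> \<le> (\<Sum>s\<in>S0. M s) / \<delta>" using Msum[OF that] \<delta>(1) by (simp add: divide_right_mono)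
        then have "M s / \<delta> \<le> C" by (simp add: C_def)
        then show ?thesis using \<delta>(1) by (simp add: divide_le_eq mult.commute)
      qed
      have vbound: "norm v \<le> C * \<bar>t\<bar>" if t: "\<bar>t\<bar> < \<epsilon>1" and cv: "\<forall>j<n. c j t = \<sigma> j v" for t v
      proof (rule ccontr)
        assume "\<not> ?thesis"
        then have gt: "norm v > C * \<bar>t\<bar>" by simp
        have tI: "t \<in> I" using t \<epsilon>1 eI by auto
        have Ct: "C * \<bar>t\<bar> \<ge> 0" using C1 by simp
        then have "v \<noteq> 0" using gt by auto
        then obtain u where u: "norm u = 1" "v = complex_of_real (norm v) *s u" using unit_decomp by blast
        obtain s where s: "s \<in> S0" "\<delta> < norm (s u)" using sph u(1) by blast
        have sS: "s \<in> S" using s S0 by blast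
        have Kpos: "K s > 0"
        proof (rule ccontr)
          assume "\<not> K s > 0"
          then have "s u = s 0" using homog_deg0_const[of s u] SK[OF sS] by simp
          moreover have "s 0 = 0" using J0 SJ[OF sS] by blast
          ultimately show False using s(2) \<delta>(1) by simp
        qed
        have e1: "norm (s v) = norm v ^ K s * norm (s u)"
          using homog_norm[OF SK[OF sS] u(1), of "norm v"] u(2) by simp
        have EMs: "\<forall>t v. \<bar>t\<bar> < E s \<longrightarrow> t \<in> I \<longrightarrow> (\<forall>j<n. c j t = \<sigma> j v) \<longrightarrow> norm (s v) \<le> M s * \<bar>t\<bar> ^ K s"
          using EM s(1) by blast
        have "\<bar>t\<bar> < E s" using \<epsilon>1(3) s(1) t by fastforce
        then have e2: "norm (s v) \<le> M s * \<bar>t\<bar> ^ K s"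
          using EMs tI cv by blast
        have e3: "(C * \<bar>t\<bar>) ^ K s < norm v ^ K s"
          using gt Ct Kpos by (intro power_strict_mono) auto
        have "C ^ 1 \<le> C ^ K s" using C1 Kpos by (intro power_increasing) auto
        then have e4: "C \<le> C ^ K s" by simp
        have e5: "M s * \<bar>t\<bar> ^ K s \<le> \<delta> * C * \<bar>t\<bar> ^ K s"
          using CM[OF s(1)] by (intro mult_right_mono) auto
        have e6: "\<delta> * C * \<bar>t\<bar> ^ K s \<le> \<delta> * (C ^ K s * \<bar>t\<bar> ^ K s)"
          using e4 \<delta>(1) by (simp add: mult.assoc mult_right_mono)
        have A: "norm v ^ K s * norm (s u) \<le> \<delta> * (C ^ K s * \<bar>t\<bar> ^ K s)"
          using e1 e2 e5 e6 by linarith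
        have B: "C ^ K s * \<bar>t\<bar> ^ K s < norm v ^ K s"
          using e3 by (simp add: power_mult_distrib)
        have "\<delta> * (C ^ K s * \<bar>t\<bar> ^ K s) < norm v ^ K s * norm (s u)"
        proof -
          have "\<delta> * (C ^ K s * \<bar>t\<bar> ^ K s) \<le> \<delta> * norm v ^ K s" using B \<delta>(1) by simp
          also have "\<dots> < norm (s u) * norm v ^ K s" using s(2) \<open>v \<noteq> 0\<close> by simp
          finally show ?thesis by (simp add: mult.commute)
        qed
        with A show False by linarith
      qed
      show ?thesis
      proof (intro allI impI)
        fix k assume k: "k < n"
        have hk: "homog_V (d k) (\<sigma> k)" using \<sigma>_homog k by blast
        have dk: "d k > 0" using dpos k by blast
        obtain B where B: "B \<ge> 0" "\<forall>v. norm (\<sigma> k v) \<le> B * norm v ^ d k"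
          using homog_bound[OF hk dk] by blast
        have cb: "norm (c k t) \<le> (B * C ^ d k) * \<bar>t\<bar> ^ d k" if t: "\<bar>t\<bar> < \<epsilon>1" for t
        proof -
          have tI: "t \<in> I" using t \<epsilon>1 eI by auto
          obtain v where v: "\<forall>j<n. c j t = \<sigma> j v" using c_in tI by blast
          have nv: "norm v \<le> C * \<bar>t\<bar>" using vbound[OF t v] .
          have "norm (c k t) = norm (\<sigma> k v)" using v k by simp
          also have "\<dots> \<le> B * norm v ^ d k" using B by simp
          also have "\<dots> \<le> B * (C * \<bar>t\<bar>) ^ d k" using B nv by (intro mult_left_mono power_mono) auto
          finally show ?thesis by (simp add: power_mult_distrib mult.assoc)
        qed
        define Mx where "Mx = Max (d ` {..<n})"
        have dMx: "d k \<le> Mx" unfolding Mx_def using k by (intro Max_ge) auto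
        obtain D where D: "\<forall>t\<in>I. D 0 t = c k t"
          "\<forall>j<Mx. \<forall>t\<in>I. (D j has_vector_derivative D (Suc j) t) (at t)" "continuous_on I (D Mx)"
          using c_smooth k unfolding Ck_on_def Mx_def by blast
        define e' where "e' = \<epsilon>1 / 2"
        have e': "e' > 0" "cball 0 e' \<subseteq> I" using \<epsilon>1 eI by (auto simp: e'_def)
        have der: "\<forall>j<d k. \<forall>t. \<bar>t\<bar> \<le> e' \<longrightarrow> (D j has_vector_derivative D (Suc j) t) (at t)"
          using D(2) dMx e'(2) by (force simp: dist_real_def)
        have cont: "isCont (D (d k)) 0"
        proof (cases "d k < Mx")
          case True
          then have "(D (d k) has_vector_derivative D (Suc (d k)) 0) (at 0)" using D(2) I_zero by blast
          then show ?thesis using has_vector_derivative_continuous by blast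
        next
          case False
          then have "d k = Mx" using dMx by simp
          then show ?thesis using D(3) I_open I_zero continuous_on_eq_continuous_at by blast
        qed
        have bnd2: "\<forall>t. \<bar>t\<bar> < e' \<longrightarrow> norm (D 0 t) \<le> (B * C ^ d k) * \<bar>t\<bar> ^ d k"
        proof (intro allI impI)
          fix t :: real assume t: "\<bar>t\<bar> < e'"
          then have "t \<in> I" using e'(2) by (auto simp: dist_real_def)
          then show "norm (D 0 t) \<le> (B * C ^ d k) * \<bar>t\<bar> ^ d k"
            using D(1) cb[of t] t \<epsilon>1 by (simp add: e'_def)
        qed
        obtain h \<epsilon>2 where h: "\<epsilon>2 > 0" "continuous_on (ball 0 \<epsilon>2) h"
          "\<forall>t\<in>ball 0 \<epsilon>2. D 0 t = (complex_of_real t) ^ d k * h t"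
          using flat_mult[OF e'(1) dk der cont bnd2] by blast
        define \<epsilon>3 where "\<epsilon>3 = min \<epsilon>2 e'"
        show "mult0 (c k) \<ge> enat (d k)"
        proof (rule mult0_ge_intro)
          show "\<epsilon>3 > 0" using h e' by (simp add: \<epsilon>3_def)
          show "continuous_on (ball 0 \<epsilon>3) h" using h(2) by (rule continuous_on_subset) (auto simp: \<epsilon>3_def)
          show "\<forall>t\<in>ball 0 \<epsilon>3. c k t = complex_of_real t ^ d k * h t"
          proof
            fix t :: real assume t: "t \<in> ball 0 \<epsilon>3"
            then have "t \<in> I" using e'(2) by (auto simp: \<epsilon>3_def dist_real_def)
            then show "c k t = complex_of_real t ^ d k * h t" using D(1) h(3) t by (auto simp: \<epsilon>3_def)
          qed
        qed
      qed
    qed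
  qed
qed

end
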